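(* Consider MDVI$(\alpha,K,M)$ with any $\alpha\in[0,1)$ and positive integers $K,M$ on an MDP as in the context, let $\delta\in(0,1)$, and let $\mathcal{E}_1$, $\mathcal{E}_2$ be the events defined in the context. On the event $\mathcal{E}_1\cap\mathcal{E}_2$, for every $k\in\{1,\dots,K-1\}$, $$\sigma(v_k) \leq 2H\min\left\{1,\ 2\max\{\alpha,\gamma\}^{k-1} + \frac{A_{\gamma,k-1}}{A_\infty} + 6H\sqrt{\frac{\iota_1}{M}}\right\}\mathbf{1} + \sigma(v^* )$$ (componentwise). Furthermore, $\sigma(v_0)=0$.
   Context: MDP: finite state set $\mathcal{X}$, finite action set $\mathcal{A}$, discount $\gamma\in[0,1)$, reward $r\in[-1,1]^{\mathcal{X}\times\mathcal{A}}$, transition kernel $P(y|x,a)$, $H=1/(1-\gamma)$, $(Pv)(x,a)=\sum_y P(y|x,a)v(y)$; $v^*$ is the optimal state-value function; $\mathbf 1$ the all-ones vector. MDVI$(\alpha,K,M)$: $s_0 = 0$, $w_0=w_{-1}=0$; for $k=0,\dots,K-1$: $v_k = w_k-\alpha w_{k-1}$; for each $(x,a)$, independent samples $y_{k,m,x,a}\sim P(\cdot|x,a)$, $m\in[M]$; $q_{k+1}(x,a) = r(x,a)+\frac{\gamma}{M}\sum_m v_k(y_{k,m,x,a})$; $s_{k+1}=q_{k+1}+\alpha s_k$; $w_{k+1}(x)=\max_a s_{k+1}(x,a)$. Notation: for $v\in\mathbb{R}^{\mathcal{X}}$, $\mathrm{Var}_P(v)(x,a) = (Pv^2)(x,a)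 - (Pv)^2(x,a)$ and $\sigma(v)=\sqrt{\mathrm{Var}_P(v)}$. $\widehat P_k v(x,a) = \frac1M\sum_m v(y_{k,m,x,a})$; $\varepsilon_k = \gamma\widehat P_{k-1}v_{k-1} - \gamma P v_{k-1}$; $E_k = \sum_{j=1}^k\alpha^{k-j}\varepsilon_j$; $A_\infty = 1/(1-\alpha)$; $A_{\gamma,k}=\sum_{j=0}^{k-1}\gamma^{k-j}\alpha^j$ (so $A_{\gamma,0}=0$); $\iota_1 = \log(8K|\mathcal{X}||\mathcal{A}|/\delta)$. $\mathcal{E}_1$: $\|E_k\|_\infty<3H\sqrt{A_\infty\iota_1/M}$ for all $k\in[K]$; $\mathcal{E}_2$: $\|\varepsilon_k\|_\infty<3H\sqrt{\iota_1/M}$ for all $k\in[K]$. *)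

theory Defs
  imports Complex_Main
begin

text \<open>MDP: states of finite type 'x, actions of finite type 'a,
  kernel P x a y = P(y|x,a), reward r x a, discount gamma.\<close>

definition Pv :: "('x::finite \<Rightarrow> 'a \<Rightarrow> 'x \<Rightarrow> real) \<Rightarrow> ('x \<Rightarrow> real) \<Rightarrow> 'x \<Rightarrow> 'a \<Rightarrow> real" where
  "Pv P v x a = (\<Sum>y\<in>UNIV. P x a y * v y)"

definition VarP :: "('x::finite \<Rightarrow> 'a \<Rightarrow> 'x \<Rightarrow> real) \<Rightarrow> ('x \<Rightarrow> real) \<Rightarrow> 'x \<Rightarrow> 'a \<Rightarrow> real" where
  "VarP P v x a = Pv P (\<lambda>y. (v y)\<^sup>2) x a - (Pv P v x a)\<^sup>2"

definition sigmaP :: "('x::finite \<Rightarrow> 'a \<Rightarrow> 'x \<Rightarrow> real) \<Rightarrow> ('x \<Rightarrow> real) \<Rightarrow> 'x \<Rightarrow> 'a \<Rightarrow> real" where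
  "sigmaP P v x a = sqrt (VarP P v x a)"

definition is_mdp :: "('x::finite \<Rightarrow> 'a::finite \<Rightarrow> 'x \<Rightarrow> real) \<Rightarrow> ('x \<Rightarrow> 'a \<Rightarrow> real) \<Rightarrow> real \<Rightarrow> bool" where
  "is_mdp P r \<gamma> \<longleftrightarrow> 0 \<le> \<gamma> \<and> \<gamma> < 1 \<and>
     (\<forall>x a. \<bar>r x a\<bar> \<le> 1) \<and>
     (\<forall>x a y. 0 \<le> P x a y) \<and> (\<forall>x a. (\<Sum>y\<in>UNIV. P x a y) = 1)"

definition bellman_opt :: "('x::finite \<Rightarrow> 'a::finite \<Rightarrow> 'x \<Rightarrow> real) \<Rightarrow> ('x \<Rightarrow> 'a \<Rightarrow> real) \<Rightarrow> real \<Rightarrow> ('x \<Rightarrow> real) \<Rightarrow> 'x \<Rightarrow> real" where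
  "bellman_opt P r \<gamma> v x = Max (range (\<lambda>a. r x a + \<gamma> * Pv P v x a))"

definition vstar :: "('x::finite \<Rightarrow> 'a::finite \<Rightarrow> 'x \<Rightarrow> real) \<Rightarrow> ('x \<Rightarrow> 'a \<Rightarrow> real) \<Rightarrow> real \<Rightarrow> 'x \<Rightarrow> real" where
  "vstar P r \<gamma> = (THE v. bellman_opt P r \<gamma> v = v)"

text \<open>MDVI iterates. Samples: y k m x a = y_{k,m,x,a} (m ranges over {0..<M}).
  mdvi_sw k = (s_k, w_k, w_{k-1}).\<close>
fun mdvi_sw :: "('x::finite \<Rightarrow> 'a::finite \<Rightarrow> real) \<Rightarrow> real \<Rightarrow> real \<Rightarrow> nat \<Rightarrow>
    (nat \<Rightarrow> nat \<Rightarrow> 'x \<Rightarrow> 'a \<Rightarrow> 'x) \<Rightarrow> nat \<Rightarrow> ('x \<Rightarrow> 'a \<Rightarrow> real) \<times> ('x \<Rightarrow> real) \<times> ('x \<Rightarrow> real)" where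
  "mdvi_sw r \<gamma> \<alpha> M y 0 = ((\<lambda>x a. 0), (\<lambda>x. 0), (\<lambda>x. 0))"
| "mdvi_sw r \<gamma> \<alpha> M y (Suc k) =
     (let (s, w, wp) = mdvi_sw r \<gamma> \<alpha> M y k;
          v = (\<lambda>x. w x - \<alpha> * wp x);
          q = (\<lambda>x a. r x a + \<gamma> / real M * (\<Sum>m<M. v (y k m x a)));
          s' = (\<lambda>x a. q x a + \<alpha> * s x a)
      in (s', (\<lambda>x. Max (range (s' x))), w))"

definition mdvi_v :: "('x::finite \<Rightarrow> 'a::finite \<Rightarrow> real) \<Rightarrow> real \<Rightarrow> real \<Rightarrow> nat \<Rightarrow>
    (nat \<Rightarrow> nat \<Rightarrow> 'x \<Rightarrow> 'a \<Rightarrow> 'x) \<Rightarrow> nat \<Rightarrow> 'x \<Rightarrow> real" where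
  "mdvi_v r \<gamma> \<alpha> M y k x =
     (case mdvi_sw r \<gamma> \<alpha> M y k of (s, w, wp) \<Rightarrow> w x - \<alpha> * wp x)"

definition Phat :: "nat \<Rightarrow> (nat \<Rightarrow> nat \<Rightarrow> 'x \<Rightarrow> 'a \<Rightarrow> 'x) \<Rightarrow> nat \<Rightarrow> ('x \<Rightarrow> real) \<Rightarrow> 'x \<Rightarrow> 'a \<Rightarrow> real" where
  "Phat M y k v x a = (\<Sum>m<M. v (y k m x a)) / real M"

definition mdvi_eps :: "('x::finite \<Rightarrow> 'a::finite \<Rightarrow> 'x \<Rightarrow> real) \<Rightarrow> ('x \<Rightarrow> 'a \<Rightarrow> real) \<Rightarrow> real \<Rightarrow> real \<Rightarrow> nat \<Rightarrow>
    (nat \<Rightarrow> nat \<Rightarrow> 'x \<Rightarrow> 'a \<Rightarrow> 'x) \<Rightarrow> nat \<Rightarrow> 'x \<Rightarrow> 'a \<Rightarrow> real" where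
  "mdvi_eps P r \<gamma> \<alpha> M y k x a =
     \<gamma> * Phat M y (k - 1) (mdvi_v r \<gamma> \<alpha> M y (k - 1)) x a - \<gamma> * Pv P (mdvi_v r \<gamma> \<alpha> M y (k - 1)) x a"

definition mdvi_E :: "('x::finite \<Rightarrow> 'a::finite \<Rightarrow> 'x \<Rightarrow> real) \<Rightarrow> ('x \<Rightarrow> 'a \<Rightarrow> real) \<Rightarrow> real \<Rightarrow> real \<Rightarrow> nat \<Rightarrow>
    (nat \<Rightarrow> nat \<Rightarrow> 'x \<Rightarrow> 'a \<Rightarrow> 'x) \<Rightarrow> nat \<Rightarrow> 'x \<Rightarrow> 'a \<Rightarrow> real" where
  "mdvi_E P r \<gamma> \<alpha> M y k x a = (\<Sum>j=1..k. \<alpha> ^ (k - j) * mdvi_eps P r \<gamma> \<alpha> M y j x a)"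

definition A_inf :: "real \<Rightarrow> real" where
  "A_inf \<alpha> = 1 / (1 - \<alpha>)"

definition A_gamma :: "real \<Rightarrow> real \<Rightarrow> nat \<Rightarrow> real" where
  "A_gamma \<gamma> \<alpha> k = (\<Sum>j<k. \<gamma> ^ (k - j) * \<alpha> ^ j)"

definition iota1 :: "nat \<Rightarrow> nat \<Rightarrow> nat \<Rightarrow> real \<Rightarrow> real" where
  "iota1 K nX nA \<delta> = ln (8 * real K * real nX * real nA / \<delta>)"

end

theory Submission
  imports Defs "HOL-Analysis.Analysis"
begin

lemma Pv_mono_bound:
  assumes "is_mdp P r \<gamma>" "\<And>y. u y \<le> v y + B"
  shows "Pv P u x a \<le> Pv P v x a + B"
proof -
  from assms(1) have p: "\<And>y. 0 \<le> P x a y" and s: "(\<Sum>y\<in>UNIV. P x a y) = 1"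
    by (auto simp: is_mdp_def)
  have "Pv P u x a \<le> (\<Sum>y\<in>UNIV. P x a y * (v y + B))"
    unfolding Pv_def by (intro sum_mono mult_left_mono assms(2) p)
  also have "\<dots> = Pv P v x a + B * (\<Sum>y\<in>UNIV. P x a y)"
    by (simp add: Pv_def algebra_simps sum.distrib sum_distrib_left sum_distrib_right)
  finally show ?thesis using s by simp
qed

lemma Pv_lin: "Pv P (\<lambda>y. u y + c * v y) x a = Pv P u x a + c * Pv P v x a"
  by (simp add: Pv_def algebra_simps sum.distrib sum_distrib_left)

lemma Pv_diff: "Pv P (\<lambda>y. u y - v y) x a = Pv P u x a - Pv P v x a"
  by (simp add: Pv_def algebra_simps sum_subtractf)

lemma Pv_abs_bound:
  assumes "is_mdp P r \<gamma>" "\<And>y. \<bar>u y\<bar> \<le> B"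
  shows "\<bar>Pv P u x a\<bar> \<le> B"
proof -
  have "Pv P u x a \<le> Pv P (\<lambda>y. 0) x a + B" using Pv_mono_bound[OF assms(1), of u "\<lambda>y. 0" B] assms(2)
    by (metis abs_le_D1 add_0)
  moreover have "Pv P (\<lambda>y. 0) x a \<le> Pv P u x a + B" using Pv_mono_bound[OF assms(1), of "\<lambda>y. 0" u B] assms(2)
    by (smt (verit))
  ultimately show ?thesis by (simp add: Pv_def)
qed

lemma bo_ge: "r x a + \<gamma> * Pv P v x a \<le> bellman_opt P r \<gamma> v x"
  unfolding bellman_opt_def by (rule Max_ge) auto

lemma bo_ex: "\<exists>a. bellman_opt P r \<gamma> v x = r x a + \<gamma> * Pv P v x a"
proof -
  have "bellman_opt P r \<gamma> v x \<in> range (\<lambda>a. r x a + \<gamma> * Pv P v x a)"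
    unfolding bellman_opt_def by (rule Max_in) auto
  then show ?thesis by auto
qed

lemma bo_contr:
  assumes mdp: "is_mdp P r \<gamma>" and B: "\<And>y. \<bar>u y - v y\<bar> \<le> B"
  shows "\<bar>bellman_opt P r \<gamma> u x - bellman_opt P r \<gamma> v x\<bar> \<le> \<gamma> * B"
proof -
  have g: "0 \<le> \<gamma>" using mdp by (simp add: is_mdp_def)
  have d: "\<bar>Pv P u x a - Pv P v x a\<bar> \<le> B" for a
    using Pv_abs_bound[OF mdp, of "\<lambda>y. u y - v y" B x a] B by (simp add: Pv_diff)
  obtain a1 where a1: "bellman_opt P r \<gamma> u x = r x a1 + \<gamma> * Pv P u x a1" using bo_ex by blast
  obtain a2 where a2: "bellman_opt P r \<gamma> v x = r x a2 + \<gamma> * Pv P v x a2" using bo_ex by blast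
  have 1: "bellman_opt P r \<gamma> u x - bellman_opt P r \<gamma> v x \<le> \<gamma> * B"
  proof -
    have "bellman_opt P r \<gamma> v x \<ge> r x a1 + \<gamma> * Pv P v x a1" by (rule bo_ge)
    moreover have "\<gamma> * (Pv P u x a1 - Pv P v x a1) \<le> \<gamma> * B"
      using d[of a1] g by (intro mult_left_mono) auto
    ultimately show ?thesis using a1 by (simp add: algebra_simps)
  qed
  have 2: "bellman_opt P r \<gamma> v x - bellman_opt P r \<gamma> u x \<le> \<gamma> * B"
  proof -
    have "bellman_opt P r \<gamma> u x \<ge> r x a2 + \<gamma> * Pv P u x a2" by (rule bo_ge)
    moreover have "\<gamma> * (Pv P v x a2 - Pv P u x a2) \<le> \<gamma> * B"
      using d[of a2] g by (intro mult_left_mono) auto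
    ultimately show ?thesis using a2 by (simp add: algebra_simps)
  qed
  from 1 2 show ?thesis by linarith
qed

lemma bo_iter_contr:
  assumes mdp: "is_mdp P r \<gamma>" and B: "\<And>y. \<bar>u y - v y\<bar> \<le> B"
  shows "\<bar>(bellman_opt P r \<gamma> ^^ n) u x - (bellman_opt P r \<gamma> ^^ n) v x\<bar> \<le> \<gamma> ^ n * B"
proof (induction n arbitrary: x)
  case 0 then show ?case using B by simp
next
  case (Suc n)
  have "\<bar>bellman_opt P r \<gamma> ((bellman_opt P r \<gamma> ^^ n) u) x - bellman_opt P r \<gamma> ((bellman_opt P r \<gamma> ^^ n) v) x\<bar>
        \<le> \<gamma> * (\<gamma> ^ n * B)"
    by (rule bo_contr[OF mdp Suc.IH])
  then show ?case by simp
qed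

lemma bo_bound:
  assumes mdp: "is_mdp P r \<gamma>" and B: "\<And>y. \<bar>u y\<bar> \<le> 1 / (1 - \<gamma>)"
  shows "\<bar>bellman_opt P r \<gamma> u x\<bar> \<le> 1 / (1 - \<gamma>)"
proof -
  have g: "0 \<le> \<gamma>" "\<gamma> < 1" and rb: "\<bar>r x a\<bar> \<le> 1" for a using mdp by (auto simp: is_mdp_def)
  obtain a where a: "bellman_opt P r \<gamma> u x = r x a + \<gamma> * Pv P u x a" using bo_ex by blast
  have pb: "\<bar>Pv P u x a\<bar> \<le> 1 / (1 - \<gamma>)" by (rule Pv_abs_bound[OF mdp]) (rule B)
  have "\<bar>\<gamma> * Pv P u x a\<bar> \<le> \<gamma> * (1 / (1 - \<gamma>))"
    using mult_left_mono[OF pb g(1)] g by (simp add: abs_mult)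
  hence "\<bar>bellman_opt P r \<gamma> u x\<bar> \<le> 1 + \<gamma> * (1 / (1 - \<gamma>))" using a rb[of a] by linarith
  also have "\<dots> = 1 / (1 - \<gamma>)" using g by (simp add: field_simps)
  finally show ?thesis .
qed

lemma vstar_props:
  assumes mdp: "is_mdp P r \<gamma>"
  shows "bellman_opt P r \<gamma> (vstar P r \<gamma>) = vstar P r \<gamma>"
    and "\<And>x. \<bar>vstar P r \<gamma> x\<bar> \<le> 1 / (1 - \<gamma>)"
proof -
  have g: "0 \<le> \<gamma>" "\<gamma> < 1" using mdp by (auto simp: is_mdp_def)
  define H where "H = 1 / (1 - \<gamma>)"
  have H0: "0 < H" using g by (simp add: H_def)
  define F where "F = bellman_opt P r \<gamma>"
  define V where "V n = (F ^^ n) (\<lambda>_. 0)" for n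
  have Vb: "\<bar>V n x\<bar> \<le> H" for n x
  proof (induction n arbitrary: x)
    case 0 then show ?case using H0 by (simp add: V_def)
  next
    case (Suc n)
    have "V (Suc n) = F (V n)" by (simp add: V_def)
    moreover have "\<bar>F (V n) x\<bar> \<le> H" unfolding F_def H_def by (rule bo_bound[OF mdp]) (use Suc.IH in \<open>simp add: H_def\<close>)
    ultimately show ?case by simp
  qed
  have Vd: "\<bar>V m x - V n x\<bar> \<le> \<gamma> ^ n * H" if "n \<le> m" for m n x
  proof -
    have "(F ^^ (n + (m - n))) (\<lambda>_. 0) = (F ^^ n) ((F ^^ (m - n)) (\<lambda>_. 0))" by (simp add: funpow_add)
    hence "V m = (F ^^ n) (V (m - n))" unfolding V_def using that by simp
    moreover have "V n = (F ^^ n) (V 0)" by (simp add: V_def)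
    ultimately show ?thesis unfolding F_def
      using bo_iter_contr[OF mdp, of "V (m - n)" "V 0" H n x] Vb by (simp add: V_def)
  qed
  have p0: "(\<lambda>n. \<gamma> ^ n) \<longlonglongrightarrow> 0" by (rule LIMSEQ_power_zero) (use g in simp)
  have pz: "(\<lambda>n. \<gamma> ^ n * H) \<longlonglongrightarrow> 0" by (rule tendsto_mult_left_zero[OF p0])
  have conv: "convergent (\<lambda>n. V n x)" for x
  proof -
    have "Cauchy (\<lambda>n. V n x)"
    proof (rule CauchyI)
      fix e :: real assume e: "0 < e"
      from pz e obtain N where N: "\<And>n. n \<ge> N \<Longrightarrow> \<bar>\<gamma> ^ n * H\<bar> < e"
        unfolding LIMSEQ_def dist_real_def by force
      show "\<exists>N. \<forall>m\<ge>N. \<forall>n\<ge>N. norm (V m x - V n x) < e"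
      proof (intro exI allI impI)
        fix m n assume "N \<le> m" "N \<le> n"
        show "norm (V m x - V n x) < e"
        proof (cases "n \<le> m")
          case True then show ?thesis using Vd[OF True, of x] N[OF \<open>N \<le> n\<close>] by simp
        next
          case False then have "m \<le> n" by simp
          then show ?thesis using Vd[OF \<open>m \<le> n\<close>, of x] N[OF \<open>N \<le> m\<close>] by (simp add: abs_minus_commute)
        qed
      qed
    qed
    then show ?thesis by (simp add: Cauchy_convergent_iff)
  qed
  define L where "L x = lim (\<lambda>n. V n x)" for x
  have Lt: "(\<lambda>n. V n x) \<longlonglongrightarrow> L x" for x using conv[of x] by (simp add: L_def convergent_LIMSEQ_iff)
  have LV: "\<bar>L x - V n x\<bar> \<le> \<gamma> ^ n * H" for x n
  proof -
    have "(\<lambda>m. \<bar>V m x - V n x\<bar>) \<longlonglongrightarrow> \<bar>L x - V n x\<bar>" by (intro tendsto_intros Lt)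
    then show ?thesis by (rule LIMSEQ_le_const2) (use Vd in auto)
  qed
  have LB: "\<bar>L x\<bar> \<le> H" for x
  proof -
    have "(\<lambda>m. \<bar>V m x\<bar>) \<longlonglongrightarrow> \<bar>L x\<bar>" by (intro tendsto_intros Lt)
    then show ?thesis by (rule LIMSEQ_le_const2) (use Vb in auto)
  qed
  have fixL: "F L = L"
  proof
    fix x
    have le: "\<bar>F L x - L x\<bar> \<le> 2 * (\<gamma> ^ n * H)" for n
    proof -
      have "\<bar>F L x - F (V n) x\<bar> \<le> \<gamma> * (\<gamma> ^ n * H)" unfolding F_def by (rule bo_contr[OF mdp LV])
      moreover have "F (V n) = V (Suc n)" by (simp add: V_def)
      moreover have "\<bar>L x - V (Suc n) x\<bar> \<le> \<gamma> ^ n * H"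
      proof -
        have "\<gamma> * (\<gamma> ^ n * H) \<le> \<gamma> ^ n * H" using g H0 by (simp add: mult_left_le_one_le)
        then show ?thesis using LV[of x "Suc n"] by (simp add: mult.assoc)
      qed
      moreover have "\<gamma> * (\<gamma> ^ n * H) \<le> \<gamma> ^ n * H" using g H0
        by (simp add: mult_left_le_one_le)
      ultimately have "\<bar>F L x - V (Suc n) x\<bar> \<le> \<gamma> * (\<gamma> ^ n * H)" "\<bar>L x - V (Suc n) x\<bar> \<le> \<gamma> ^ n * H"
          "\<gamma> * (\<gamma> ^ n * H) \<le> \<gamma> ^ n * H" by simp_all
      then show ?thesis by linarith
    qed
    have "(\<lambda>n. 2 * (\<gamma> ^ n * H)) \<longlonglongrightarrow> 0" by (rule tendsto_mult_right_zero[OF pz])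
    hence "\<bar>F L x - L x\<bar> \<le> 0" by (rule LIMSEQ_le_const) (use le in auto)
    then show "F L x = L x" by simp
  qed
  have uniq: "u = v" if "F u = u" "F v = v" for u v
  proof
    fix x
    define B where "B = (\<Sum>y\<in>UNIV. \<bar>u y - v y\<bar>)"
    have Bb: "\<bar>u y - v y\<bar> \<le> B" for y unfolding B_def
      by (rule member_le_sum) auto
    have "(F ^^ n) u = u" for n using that(1) by (induction n) auto
    moreover have "(F ^^ n) v = v" for n using that(2) by (induction n) auto
    moreover have "\<bar>(F ^^ n) u x - (F ^^ n) v x\<bar> \<le> \<gamma> ^ n * B" for n
      unfolding F_def by (rule bo_iter_contr[OF mdp Bb])
    ultimately have le: "\<bar>u x - v x\<bar> \<le> \<gamma> ^ n * B" for n by simp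
    have "(\<lambda>n. \<gamma> ^ n * B) \<longlonglongrightarrow> 0" by (rule tendsto_mult_left_zero[OF p0])
    hence "\<bar>u x - v x\<bar> \<le> 0" by (rule LIMSEQ_le_const) (use le in auto)
    then show "u x = v x" by simp
  qed
  have vs: "vstar P r \<gamma> = L"
    unfolding vstar_def
  proof (rule the_equality)
    show "bellman_opt P r \<gamma> L = L" using fixL by (simp add: F_def)
    fix v assume "bellman_opt P r \<gamma> v = v" then show "v = L" using uniq fixL by (simp add: F_def)
  qed
  show "bellman_opt P r \<gamma> (vstar P r \<gamma>) = vstar P r \<gamma>" using fixL vs F_def by simp
  show "\<bar>vstar P r \<gamma> x\<bar> \<le> 1 / (1 - \<gamma>)" for x using LB vs H_def by simp
qed

lemma VarP_alt:
  assumes mdp: "is_mdp P r \<gamma>"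
  shows "VarP P f x a = (\<Sum>y\<in>UNIV. (sqrt (P x a y) * (f y - Pv P f x a))\<^sup>2)"
proof -
  from mdp have p: "\<And>y. 0 \<le> P x a y" and s: "(\<Sum>y\<in>UNIV. P x a y) = 1"
    by (auto simp: is_mdp_def)
  define m where "m = Pv P f x a"
  have "(\<Sum>y\<in>UNIV. (sqrt (P x a y) * (f y - m))\<^sup>2) = (\<Sum>y\<in>UNIV. P x a y * (f y)\<^sup>2 - 2 * m * (P x a y * f y) + m\<^sup>2 * P x a y)"
    by (rule sum.cong) (auto simp: power_mult_distrib p power2_eq_square algebra_simps)
  also have "\<dots> = Pv P (\<lambda>y. (f y)\<^sup>2) x a - 2 * m * m + m\<^sup>2 * 1"
    unfolding Pv_def m_def s[symmetric] by (simp add: sum_subtractf sum.distrib sum_distrib_left)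
  also have "\<dots> = VarP P f x a" by (simp add: VarP_def m_def power2_eq_square)
  finally show ?thesis by (simp add: m_def)
qed

lemma sigma_triangle:
  assumes mdp: "is_mdp P r \<gamma>"
  shows "sigmaP P (\<lambda>y. f y + g y) x a \<le> sigmaP P f x a + sigmaP P g x a"
proof -
  define D where "D y = sqrt (P x a y) * (f y - Pv P f x a)" for y
  define G where "G y = sqrt (P x a y) * (g y - Pv P g x a)" for y
  have m: "Pv P (\<lambda>y. f y + g y) x a = Pv P f x a + Pv P g x a" using Pv_lin[of P f 1 g x a] by simp
  have vf: "VarP P f x a = (\<Sum>y\<in>UNIV. (D y)\<^sup>2)" unfolding D_def by (rule VarP_alt[OF mdp])
  have vg: "VarP P g x a = (\<Sum>y\<in>UNIV. (G y)\<^sup>2)" unfolding G_def by (rule VarP_alt[OF mdp])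
  have vfg: "VarP P (\<lambda>y. f y + g y) x a = (\<Sum>y\<in>UNIV. (D y + G y)\<^sup>2)"
    unfolding VarP_alt[OF mdp] m D_def G_def by (simp add: algebra_simps)
  define SD where "SD = (\<Sum>y\<in>UNIV. (D y)\<^sup>2)"
  define SG where "SG = (\<Sum>y\<in>UNIV. (G y)\<^sup>2)"
  have SD0: "0 \<le> SD" and SG0: "0 \<le> SG" unfolding SD_def SG_def by (auto intro: sum_nonneg)
  have cs: "(\<Sum>y\<in>UNIV. D y * G y)\<^sup>2 \<le> SD * SG" unfolding SD_def SG_def by (rule Cauchy_Schwarz_ineq_sum)
  have cs2: "(\<Sum>y\<in>UNIV. D y * G y) \<le> sqrt SD * sqrt SG"
  proof -
    have "(\<Sum>y\<in>UNIV. D y * G y) \<le> sqrt ((\<Sum>y\<in>UNIV. D y * G y)\<^sup>2)" by simp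
    also have "\<dots> \<le> sqrt (SD * SG)" using cs by (rule real_sqrt_le_mono)
    finally show ?thesis by (simp add: real_sqrt_mult)
  qed
  have "(\<Sum>y\<in>UNIV. (D y + G y)\<^sup>2) = SD + 2 * (\<Sum>y\<in>UNIV. D y * G y) + SG"
    unfolding SD_def SG_def by (simp add: power2_sum sum.distrib sum_distrib_left mult.assoc)
  also have "\<dots> \<le> SD + 2 * (sqrt SD * sqrt SG) + SG" using cs2 by simp
  also have "\<dots> = (sqrt SD + sqrt SG)\<^sup>2" using SD0 SG0 by (simp add: power2_sum)
  finally have "VarP P (\<lambda>y. f y + g y) x a \<le> (sqrt SD + sqrt SG)\<^sup>2" using vfg by simp
  hence "sqrt (VarP P (\<lambda>y. f y + g y) x a) \<le> sqrt ((sqrt SD + sqrt SG)\<^sup>2)" by (rule real_sqrt_le_mono)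
  also have "\<dots> = sqrt SD + sqrt SG" using SD0 SG0 by simp
  finally show ?thesis unfolding sigmaP_def vf vg SD_def SG_def .
qed

lemma sigma_bound:
  assumes mdp: "is_mdp P r \<gamma>" and B: "\<And>y. \<bar>u y\<bar> \<le> B"
  shows "sigmaP P u x a \<le> B"
proof -
  have B0: "0 \<le> B" using B[of undefined] by simp
  have sq: "\<bar>(u y)\<^sup>2\<bar> \<le> B\<^sup>2" for y using B[of y] B0 by (simp add: abs_le_square_iff power2_le_iff_abs_le)
  have "VarP P u x a \<le> Pv P (\<lambda>y. (u y)\<^sup>2) x a" by (simp add: VarP_def)
  also have "\<dots> \<le> B\<^sup>2" using Pv_abs_bound[OF mdp, of "\<lambda>y. (u y)\<^sup>2" "B\<^sup>2" x a] sq by simp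
  finally have "sqrt (VarP P u x a) \<le> sqrt (B\<^sup>2)" by (rule real_sqrt_le_mono)
  then show ?thesis using B0 by (simp add: sigmaP_def)
qed

lemma sigma_zero: "sigmaP P (\<lambda>y. 0) x a = 0"
  by (simp add: sigmaP_def VarP_def Pv_def)

definition sg :: "real \<Rightarrow> real \<Rightarrow> nat \<Rightarrow> real" where
  "sg g a k = (\<Sum>i<k. g ^ (k - 1 - i) * a ^ i)"

lemma sg_Suc: "sg g a (Suc k) = g * sg g a k + a ^ k"
proof -
  have "sg g a (Suc k) = (\<Sum>i<k. g ^ (k - i) * a ^ i) + a ^ k" by (simp add: sg_def)
  also have "(\<Sum>i<k. g ^ (k - i) * a ^ i) = g * sg g a k"
    unfolding sg_def sum_distrib_left
    by (rule sum.cong) (auto simp: mult.assoc power_Suc[symmetric] Suc_diff_Suc simp del: power_Suc)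
  finally show ?thesis .
qed

lemma Ag_sg: "A_gamma g a k = g * sg g a k"
  unfolding A_gamma_def sg_def sum_distrib_left
  by (rule sum.cong) (auto simp: mult.assoc power_Suc[symmetric] Suc_diff_Suc simp del: power_Suc)

lemma Ag_Suc: "A_gamma g a (Suc k) = g * A_gamma g a k + g * a ^ k"
  unfolding Ag_sg sg_Suc by (simp add: algebra_simps)

lemma sg_diff: "(g - a) * sg g a k = g ^ k - a ^ k"
proof (induction k)
  case 0 then show ?case by (simp add: sg_def)
next
  case (Suc k)
  have "(g - a) * sg g a (Suc k) = g * ((g - a) * sg g a k) + (g - a) * a ^ k"
    unfolding sg_Suc by (simp add: algebra_simps)
  also have "\<dots> = g ^ Suc k - a ^ Suc k" unfolding Suc.IH by (simp add: algebra_simps)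
  finally show ?case .
qed

lemma sg_nonneg: "0 \<le> g \<Longrightarrow> 0 \<le> a \<Longrightarrow> 0 \<le> sg g a k"
  unfolding sg_def by (intro sum_nonneg mult_nonneg_nonneg zero_le_power)

lemma geom_Suc: "(\<Sum>j<Suc k. (z::real) ^ j) = 1 + z * (\<Sum>j<k. z ^ j)"
  by (subst sum.lessThan_Suc_shift) (simp add: sum_distrib_left)

lemma geom_le: assumes "0 \<le> (z::real)" "z < 1" shows "(\<Sum>j<k. z ^ j) \<le> 1 / (1 - z)"
proof -
  have "(\<Sum>j<k. z ^ j) = (1 - z ^ k) / (1 - z)" using assms by (simp add: sum_gp_strict)
  also have "\<dots> \<le> 1 / (1 - z)" using assms by (intro divide_right_mono) auto
  finally show ?thesis .
qed

lemma geom_nonneg: "0 \<le> (z::real) \<Longrightarrow> 0 \<le> (\<Sum>j<k. z ^ j)"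
  by (simp add: sum_nonneg)

lemma scalar_final:
  fixes a g n c :: real
  assumes a: "0 \<le> a" "a < 1" and g: "0 \<le> g" "g < 1" and n: "0 \<le> n" and c: "0 \<le> c" "c \<le> 1 / (1 - g)"
  shows "(1 - a) * (1 / (1 - g)) * A_gamma g a (Suc m) + c * n + a ^ Suc m * (1 / (1 - g))
           + a * (sg g a (Suc m) + 2 * c * n)
         \<le> 2 * (1 / (1 - g)) * (2 * max a g ^ m + A_gamma g a m * (1 - a) + 2 * n)"
proof -
  define H where "H = 1 / (1 - g)"
  define S where "S = sg g a m"
  define A where "A = A_gamma g a m"
  define p where "p = a ^ m"
  define q where "q = g ^ m"
  define b where "b = max a g ^ m"
  have H1: "1 \<le> H" using g by (simp add: H_def field_simps)
  have S0: "0 \<le> S" unfolding S_def using sg_nonneg[OF g(1) a(1)] by simp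
  have AS: "A = g * S" by (simp add: A_def S_def Ag_sg)
  have A0: "0 \<le> A" using AS S0 g by simp
  have d: "(g - a) * S = q - p" by (simp add: S_def q_def p_def sg_diff)
  have p0: "0 \<le> p" "0 \<le> q" using a g by (simp_all add: p_def q_def)
  have pb: "p \<le> b" "q \<le> b" unfolding p_def q_def b_def using a g
    by (auto intro: power_mono)
  have l1: "A_gamma g a (Suc m) = g * A + g * p" by (simp add: A_def p_def Ag_Suc)
  have l2: "sg g a (Suc m) = A + p" by (simp add: sg_Suc AS S_def p_def)
  have Hg: "H * (1 - g) = 1" using g by (simp add: H_def)
  have H0: "0 \<le> H" using H1 by simp
  have key: "a * A \<le> H * (1 - a) * A + H * b"
  proof -
    have e: "a * A - H * (1 - a) * A = H * (((a - g) - (1 - a) * (1 - g)) * A)"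
      unfolding H_def using g by (simp add: field_simps)
    have "((a - g) - (1 - a) * (1 - g)) * A \<le> (a - g) * A"
      using A0 a g by (intro mult_right_mono) auto
    also have "(a - g) * A = g * (p - q)"
    proof -
      have "(a - g) * S = - ((g - a) * S)" by (simp add: algebra_simps)
      hence "(a - g) * S = p - q" using d by simp
      then show ?thesis using AS by (metis mult.left_commute)
    qed
    also have "g * (p - q) \<le> g * p" using g p0 by (simp add: mult_left_mono)
    also have "g * p \<le> p" using g p0 by (simp add: mult_left_le_one_le)
    finally have "((a - g) - (1 - a) * (1 - g)) * A \<le> b" using pb by linarith
    hence "H * (((a - g) - (1 - a) * (1 - g)) * A) \<le> H * b" using H0 by (rule mult_left_mono)
    then show ?thesis using e by linarith
  qed
  have x0: "0 \<le> H * (1 - a) * A" using H0 a A0 by simp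
  have x1: "g * (H * (1 - a) * A) \<le> H * (1 - a) * A" using x0 g by (simp add: mult_left_le_one_le)
  have t1: "(1 - a) * H * (g * A + g * p) \<le> H * (1 - a) * A + H * ((1 - a) * g * p)"
  proof -
    have "(1 - a) * H * (g * A + g * p) = g * (H * (1 - a) * A) + H * ((1 - a) * g * p)"
      by (simp add: algebra_simps)
    then show ?thesis using x1 by linarith
  qed
  have t2: "(1 - a) * g * p + a * p \<le> p"
  proof -
    have "(1 - a) * g * p \<le> (1 - a) * p" using a g p0 by (simp add: mult_left_le_one_le mult_right_mono)
    then show ?thesis by (simp add: algebra_simps)
  qed
  have t3: "a ^ Suc m = a * p" by (simp add: p_def)
  have t4: "c * n + a * (2 * c * n) \<le> 3 * H * n"
  proof -
    have cn: "0 \<le> c * n" using c n by simp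
    have "c * n \<le> H * n" using c(2) n unfolding H_def[symmetric] by (rule mult_right_mono)
    moreover have "a * (2 * c * n) \<le> 2 * c * n" using a cn by (simp add: mult_left_le_one_le)
    ultimately show ?thesis by linarith
  qed
  have ap: "a * p \<le> p" using a p0 by (simp add: mult_left_le_one_le)
  have t5: "a * p \<le> H * p"
  proof -
    have "1 * p \<le> H * p" using H1 p0(1) by (rule mult_right_mono)
    then show ?thesis using ap by simp
  qed
  have t6: "H * p + H * (a * p) \<le> 2 * H * b"
  proof -
    have "H * p \<le> H * b" using pb H0 by (simp add: mult_left_mono)
    moreover have "H * (a * p) \<le> H * b" using ap pb H0 by (simp add: mult_left_mono)
    ultimately show ?thesis by linarith
  qed
  have t7: "H * ((1 - a) * g * p) + H * (a * p) \<le> H * p"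
  proof -
    have "H * ((1 - a) * g * p + a * p) \<le> H * p" using t2 H0 by (rule mult_left_mono)
    then show ?thesis by (simp add: algebra_simps)
  qed
  have "(1 - a) * H * A_gamma g a (Suc m) + c * n + a ^ Suc m * H + a * (sg g a (Suc m) + 2 * c * n)
      = (1 - a) * H * (g * A + g * p) + (c * n + a * (2 * c * n)) + H * (a * p) + a * A + a * p"
    unfolding l1 l2 t3 by (simp add: algebra_simps)
  also have "\<dots> \<le> 2 * H * (1 - a) * A + 3 * H * b + 3 * H * n"
  proof -
    have t8: "H * p \<le> H * b" using pb H0 by (simp add: mult_left_mono)
    have "2 * H * (1 - a) * A = H * (1 - a) * A + H * (1 - a) * A" by simp
    then show ?thesis using t1 t4 t5 t8 t7 key by linarith
  qed
  also have "\<dots> \<le> 2 * H * (2 * b + A * (1 - a) + 2 * n)"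
  proof -
    have "0 \<le> H * b" using H0 pb p0 by simp
    moreover have "0 \<le> H * n" using H0 n by simp
    ultimately show ?thesis by (simp add: algebra_simps)
  qed
  finally show ?thesis unfolding H_def b_def A_def by simp
qed

lemma Pv_scale: "Pv P (\<lambda>y. c * u y) x a = c * Pv P u x a"
  by (simp add: Pv_def sum_distrib_left algebra_simps)

context
  fixes P :: "'x::finite \<Rightarrow> 'a::finite \<Rightarrow> 'x \<Rightarrow> real"
    and r :: "'x \<Rightarrow> 'a \<Rightarrow> real" and \<gamma> \<alpha> :: real and M :: nat
    and y :: "nat \<Rightarrow> nat \<Rightarrow> 'x \<Rightarrow> 'a \<Rightarrow> 'x"
begin

abbreviation "SS k \<equiv> fst (mdvi_sw r \<gamma> \<alpha> M y k)"
abbreviation "WW k \<equiv> fst (snd (mdvi_sw r \<gamma> \<alpha> M y k))"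
abbreviation "WP k \<equiv> snd (snd (mdvi_sw r \<gamma> \<alpha> M y k))"
abbreviation "VV k \<equiv> mdvi_v r \<gamma> \<alpha> M y k"
abbreviation "eps k \<equiv> mdvi_eps P r \<gamma> \<alpha> M y k"
abbreviation "EE k \<equiv> mdvi_E P r \<gamma> \<alpha> M y k"

lemma VV_eq: "VV k x = WW k x - \<alpha> * WP k x"
  by (simp add: mdvi_v_def split: prod.splits)

lemma sw_0: "SS 0 = (\<lambda>x a. 0)" "WW 0 = (\<lambda>x. 0)" "WP 0 = (\<lambda>x. 0)"
  by simp_all

lemma sw_Suc:
  "SS (Suc k) x a = r x a + \<gamma> / real M * (\<Sum>m<M. VV k (y k m x a)) + \<alpha> * SS k x a"
  "WW (Suc k) x = Max (range (SS (Suc k) x))"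
  "WP (Suc k) = WW k"
proof -
  obtain s w wp where e: "mdvi_sw r \<gamma> \<alpha> M y k = (s, w, wp)" by (cases "mdvi_sw r \<gamma> \<alpha> M y k") auto
  have v: "VV k = (\<lambda>x. w x - \<alpha> * wp x)" by (rule ext) (simp add: mdvi_v_def e)
  show "SS (Suc k) x a = r x a + \<gamma> / real M * (\<Sum>m<M. VV k (y k m x a)) + \<alpha> * SS k x a"
    by (simp add: e v Let_def)
  show "WW (Suc k) x = Max (range (SS (Suc k) x))" by (simp add: e Let_def)
  show "WP (Suc k) = WW k" by (simp add: e Let_def)
qed

declare mdvi_sw.simps(2)[simp del]

lemma W_ge: "SS k x a \<le> WW k x"
proof (cases k)
  case 0 then show ?thesis by simp
next
  case (Suc n) then show ?thesis unfolding Suc sw_Suc(2) by (intro Max_ge) auto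
qed

lemma W_ex: "\<exists>a. WW k x = SS k x a"
proof (cases k)
  case 0 then show ?thesis by simp
next
  case (Suc n)
  have "Max (range (SS (Suc n) x)) \<in> range (SS (Suc n) x)" by (rule Max_in) auto
  then obtain a where "Max (range (SS (Suc n) x)) = SS (Suc n) x a" by blast
  then show ?thesis unfolding Suc sw_Suc(2) by blast
qed

lemma qq_eq: "SS (Suc k) x a - \<alpha> * SS k x a = r x a + \<gamma> * Pv P (VV k) x a + eps (Suc k) x a"
  by (simp add: sw_Suc(1) mdvi_eps_def Phat_def)

lemma E_0: "EE 0 x a = 0" by (simp add: mdvi_E_def)

lemma E_Suc: "EE (Suc k) x a = eps (Suc k) x a + \<alpha> * EE k x a"
proof -
  have "EE (Suc k) x a = (\<Sum>j=1..k. \<alpha> ^ (Suc k - j) * eps j x a) + eps (Suc k) x a"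
    by (simp add: mdvi_E_def)
  also have "(\<Sum>j=1..k. \<alpha> ^ (Suc k - j) * eps j x a) = \<alpha> * EE k x a"
    unfolding mdvi_E_def sum_distrib_left
    by (rule sum.cong) (auto simp: Suc_diff_le mult.assoc)
  finally show ?thesis by simp
qed

lemma CF: "SS k x a = (\<Sum>j<k. \<alpha> ^ j) * r x a + \<gamma> * Pv P (WP k) x a + EE k x a"
proof (induction k arbitrary: x a)
  case 0 then show ?case by (simp add: E_0 Pv_def)
next
  case (Suc k)
  have w: "WP (Suc k) = (\<lambda>y. VV k y + \<alpha> * WP k y)" by (rule ext) (simp add: sw_Suc(3) VV_eq)
  have A: "(\<Sum>j<Suc k. \<alpha> ^ j) = 1 + \<alpha> * (\<Sum>j<k. \<alpha> ^ j)"
    by (subst sum.lessThan_Suc_shift) (simp add: sum_distrib_left)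
  have "SS (Suc k) x a = r x a + \<gamma> * Pv P (VV k) x a + eps (Suc k) x a + \<alpha> * SS k x a"
    using qq_eq[of k x a] by simp
  also have "\<dots> = (\<Sum>j<Suc k. \<alpha> ^ j) * r x a + \<gamma> * Pv P (WP (Suc k)) x a + EE (Suc k) x a"
    unfolding Suc.IH w Pv_lin E_Suc A by (simp add: algebra_simps)
  finally show ?case .
qed

lemma S_diff: "SS (Suc k) x a - SS k x a
   = \<alpha> ^ k * r x a + \<gamma> * Pv P (\<lambda>y. WW k y - WP k y) x a + eps (Suc k) x a - (1 - \<alpha>) * EE k x a"
proof -
  have A: "(\<Sum>j<Suc k. \<alpha> ^ j) = (\<Sum>j<k. \<alpha> ^ j) + \<alpha> ^ k" by simp
  show ?thesis
    unfolding CF[of "Suc k"] CF[of k] A E_Suc sw_Suc(3) Pv_diff by (simp add: algebra_simps)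
qed

lemma Pv_const: "is_mdp P r \<gamma> \<Longrightarrow> Pv P (\<lambda>y. c) x a = c"
  by (simp add: Pv_def is_mdp_def flip: sum_distrib_right)

lemma V_bound:
  assumes mdp: "is_mdp P r \<gamma>" and a0: "0 \<le> \<alpha>" and M: "0 < M"
  shows "\<bar>VV k x\<bar> \<le> 1 / (1 - \<gamma>)"
proof (induction k arbitrary: x)
  have g: "0 \<le> \<gamma>" "\<gamma> < 1" using mdp by (auto simp: is_mdp_def)
  case 0 then show ?case using g by (simp add: VV_eq)
next
  case (Suc k)
  have g: "0 \<le> \<gamma>" "\<gamma> < 1" and rb: "\<And>x a. \<bar>r x a\<bar> \<le> 1" using mdp by (auto simp: is_mdp_def)
  define H where "H = 1 / (1 - \<gamma>)"
  have qb: "\<bar>SS (Suc k) x a - \<alpha> * SS k x a\<bar> \<le> H" for a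
  proof -
    have "\<bar>\<Sum>m<M. VV k (y k m x a)\<bar> \<le> (\<Sum>m<M. \<bar>VV k (y k m x a)\<bar>)" by (rule sum_abs)
    also have "\<dots> \<le> (\<Sum>m<M. H)" using Suc.IH by (intro sum_mono) (simp add: H_def)
    also have "\<dots> = real M * H" by simp
    finally have s: "\<bar>\<Sum>m<M. VV k (y k m x a)\<bar> \<le> real M * H" .
    have "\<bar>\<gamma> / real M * (\<Sum>m<M. VV k (y k m x a))\<bar> = \<gamma> / real M * \<bar>\<Sum>m<M. VV k (y k m x a)\<bar>"
      using g by (simp add: abs_mult)
    also have "\<dots> \<le> \<gamma> / real M * (real M * H)" using s g by (intro mult_left_mono) auto
    also have "\<dots> = \<gamma> * H" using M by simp
    finally have "\<bar>\<gamma> / real M * (\<Sum>m<M. VV k (y k m x a))\<bar> \<le> \<gamma> * H" .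
    moreover have "1 + \<gamma> * H = H" using g by (simp add: H_def field_simps)
    moreover have "SS (Suc k) x a - \<alpha> * SS k x a = r x a + \<gamma> / real M * (\<Sum>m<M. VV k (y k m x a))"
      by (simp add: sw_Suc(1))
    ultimately show ?thesis using rb[of x a] abs_triangle_ineq[of "r x a" "\<gamma> / real M * (\<Sum>m<M. VV k (y k m x a))"]
      by linarith
  qed
  obtain a1 where a1: "WW (Suc k) x = SS (Suc k) x a1" using W_ex by blast
  obtain a2 where a2: "WW k x = SS k x a2" using W_ex by blast
  have "VV (Suc k) x \<le> SS (Suc k) x a1 - \<alpha> * SS k x a1"
    using mult_left_mono[OF W_ge[of k x a1] a0] a1 by (simp add: VV_eq sw_Suc(3))
  moreover have "VV (Suc k) x \<ge> SS (Suc k) x a2 - \<alpha> * SS k x a2"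
    using W_ge[of "Suc k" x a2] a2 by (simp add: VV_eq sw_Suc(3))
  ultimately show ?case using qb[of a1] qb[of a2] unfolding H_def by linarith
qed

lemma Qstar_le:
  assumes mdp: "is_mdp P r \<gamma>"
  shows "r x a + \<gamma> * Pv P (vstar P r \<gamma>) x a \<le> vstar P r \<gamma> x"
  using bo_ge[of r x a \<gamma> P "vstar P r \<gamma>"] vstar_props(1)[OF mdp] by simp

lemma Qstar_ex:
  assumes mdp: "is_mdp P r \<gamma>"
  shows "\<exists>a. vstar P r \<gamma> x = r x a + \<gamma> * Pv P (vstar P r \<gamma>) x a"
  using bo_ex[of P r \<gamma> "vstar P r \<gamma>" x] vstar_props(1)[OF mdp] by simp

lemma Up:
  assumes mdp: "is_mdp P r \<gamma>" and a0: "0 \<le> \<alpha>"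
    and epsb: "\<And>j x a. 1 \<le> j \<Longrightarrow> j \<le> K \<Longrightarrow> \<bar>eps j x a\<bar> \<le> n1"
  shows "k \<le> K \<Longrightarrow> VV k x - vstar P r \<gamma> x \<le> \<gamma> ^ k * (1 / (1 - \<gamma>)) + (\<Sum>j<k. \<gamma> ^ j) * n1"
proof (induction k arbitrary: x)
  case 0 then show ?case using vstar_props(2)[OF mdp, of x] by (simp add: VV_eq)
next
  case (Suc k)
  have g: "0 \<le> \<gamma>" "\<gamma> < 1" using mdp by (auto simp: is_mdp_def)
  define B where "B = \<gamma> ^ k * (1 / (1 - \<gamma>)) + (\<Sum>j<k. \<gamma> ^ j) * n1"
  have kK: "k \<le> K" using Suc.prems by simp
  have IH: "VV k y \<le> vstar P r \<gamma> y + B" for y using Suc.IH[OF kK, of y] by (simp add: B_def)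
  obtain a1 where a1: "WW (Suc k) x = SS (Suc k) x a1" using W_ex by blast
  have "VV (Suc k) x \<le> SS (Suc k) x a1 - \<alpha> * SS k x a1"
    using mult_left_mono[OF W_ge[of k x a1] a0] a1 by (simp add: VV_eq sw_Suc(3))
  also have "\<dots> = r x a1 + \<gamma> * Pv P (VV k) x a1 + eps (Suc k) x a1" by (rule qq_eq)
  also have "\<dots> \<le> r x a1 + \<gamma> * (Pv P (vstar P r \<gamma>) x a1 + B) + n1"
  proof -
    have "Pv P (VV k) x a1 \<le> Pv P (vstar P r \<gamma>) x a1 + B" by (rule Pv_mono_bound[OF mdp IH])
    hence "\<gamma> * Pv P (VV k) x a1 \<le> \<gamma> * (Pv P (vstar P r \<gamma>) x a1 + B)" using g(1) by (rule mult_left_mono)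
    moreover have "eps (Suc k) x a1 \<le> n1" using epsb[of "Suc k" x a1] Suc.prems by simp
    ultimately show ?thesis by linarith
  qed
  also have "\<dots> \<le> vstar P r \<gamma> x + \<gamma> * B + n1" using Qstar_le[OF mdp, of x a1] by (simp add: algebra_simps)
  also have "vstar P r \<gamma> x + \<gamma> * B + n1 = vstar P r \<gamma> x + (\<gamma> ^ Suc k * (1 / (1 - \<gamma>)) + (\<Sum>j<Suc k. \<gamma> ^ j) * n1)"
    unfolding B_def geom_Suc by (simp add: algebra_simps)
  finally show ?case by linarith
qed

lemma Lo1:
  assumes mdp: "is_mdp P r \<gamma>" and a0: "0 \<le> \<alpha>" and a1: "\<alpha> < 1"
    and Eb: "\<And>j x a. 1 \<le> j \<Longrightarrow> j \<le> K \<Longrightarrow> (1 - \<alpha>) * \<bar>EE j x a\<bar> \<le> n1"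
  shows "k \<le> K \<Longrightarrow> (1 - \<alpha>) * (\<Sum>j<k. \<alpha> ^ j) * vstar P r \<gamma> x
            - ((1 - \<alpha>) * (1 / (1 - \<gamma>)) * A_gamma \<gamma> \<alpha> k + (\<Sum>j<k. \<gamma> ^ j) * n1) \<le> (1 - \<alpha>) * WW k x"
proof (induction k arbitrary: x)
  case 0 then show ?case by (simp add: A_gamma_def)
next
  case (Suc k)
  have g: "0 \<le> \<gamma>" "\<gamma> < 1" using mdp by (auto simp: is_mdp_def)
  define H where "H = 1 / (1 - \<gamma>)"
  define vs where "vs = vstar P r \<gamma>"
  define A where "A = (\<Sum>j<k. \<alpha> ^ j)"
  define A' where "A' = (\<Sum>j<Suc k. \<alpha> ^ j)"
  define R where "R = (1 - \<alpha>) * H * A_gamma \<gamma> \<alpha> k + (\<Sum>j<k. \<gamma> ^ j) * n1"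
  define X where "X = \<gamma> * (1 - \<alpha>) * \<alpha> ^ k"
  have kK: "k \<le> K" using Suc.prems by simp
  have IH: "(1 - \<alpha>) * A * vs y - R \<le> (1 - \<alpha>) * WW k y" for y
    using Suc.IH[OF kK, of y] by (simp add: A_def R_def H_def vs_def)
  obtain as where as: "vs x = r x as + \<gamma> * Pv P vs x as" using Qstar_ex[OF mdp, of x] by (auto simp: vs_def)
  have h1: "SS (Suc k) x as \<le> WW (Suc k) x" by (rule W_ge)
  have h1': "SS (Suc k) x as = A' * r x as + \<gamma> * Pv P (WW k) x as + EE (Suc k) x as"
    unfolding CF[of "Suc k"] sw_Suc(3) A'_def ..
  have am: "0 \<le> 1 - \<alpha>" using a1 by simp
  have m1: "(1 - \<alpha>) * A' * r x as + \<gamma> * ((1 - \<alpha>) * Pv P (WW k) x as) + (1 - \<alpha>) * EE (Suc k) x as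
            \<le> (1 - \<alpha>) * WW (Suc k) x"
  proof -
    have "(1 - \<alpha>) * SS (Suc k) x as \<le> (1 - \<alpha>) * WW (Suc k) x" using h1 am by (rule mult_left_mono)
    then show ?thesis unfolding h1' by (simp add: algebra_simps)
  qed
  have h2: "Pv P (\<lambda>y. (1 - \<alpha>) * A * vs y - R) x as \<le> Pv P (\<lambda>y. (1 - \<alpha>) * WW k y) x as + 0"
    using IH by (intro Pv_mono_bound[OF mdp]) simp
  have h2': "Pv P (\<lambda>y. (1 - \<alpha>) * A * vs y - R) x as = (1 - \<alpha>) * A * Pv P vs x as - R"
    unfolding Pv_diff Pv_scale Pv_const[OF mdp] ..
  have m2: "\<gamma> * ((1 - \<alpha>) * A * Pv P vs x as) - \<gamma> * R \<le> \<gamma> * ((1 - \<alpha>) * Pv P (WW k) x as)"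
  proof -
    have "(1 - \<alpha>) * A * Pv P vs x as - R \<le> (1 - \<alpha>) * Pv P (WW k) x as"
      using h2 unfolding h2' Pv_scale by simp
    hence "\<gamma> * ((1 - \<alpha>) * A * Pv P vs x as - R) \<le> \<gamma> * ((1 - \<alpha>) * Pv P (WW k) x as)"
      using g(1) by (rule mult_left_mono)
    then show ?thesis by (simp add: algebra_simps)
  qed
  have h3: "- n1 \<le> (1 - \<alpha>) * EE (Suc k) x as"
  proof -
    have "(1 - \<alpha>) * \<bar>EE (Suc k) x as\<bar> \<le> n1" using Eb[of "Suc k" x as] Suc.prems by simp
    moreover have "(1 - \<alpha>) * (- \<bar>EE (Suc k) x as\<bar>) \<le> (1 - \<alpha>) * EE (Suc k) x as"
      using am by (intro mult_left_mono) auto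
    ultimately show ?thesis by linarith
  qed
  have h5: "X * Pv P vs x as \<le> X * H"
  proof -
    have "\<bar>Pv P vs x as\<bar> \<le> H" unfolding H_def vs_def by (rule Pv_abs_bound[OF mdp vstar_props(2)[OF mdp]])
    moreover have "0 \<le> X" unfolding X_def using g a0 am by simp
    ultimately show ?thesis by (simp add: mult_left_mono)
  qed
  have AA: "A' = A + \<alpha> ^ k" by (simp add: A'_def A_def)
  have m3: "(1 - \<alpha>) * A' * vs x = (1 - \<alpha>) * A' * r x as + \<gamma> * ((1 - \<alpha>) * A * Pv P vs x as) + X * Pv P vs x as"
    by (subst as) (simp add: AA X_def algebra_simps)
  have m4: "(1 - \<alpha>) * H * A_gamma \<gamma> \<alpha> (Suc k) + (\<Sum>j<Suc k. \<gamma> ^ j) * n1 = \<gamma> * R + X * H + n1"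
    unfolding Ag_Suc geom_Suc R_def X_def by (simp add: algebra_simps)
  have "(1 - \<alpha>) * A' * vs x - ((1 - \<alpha>) * H * A_gamma \<gamma> \<alpha> (Suc k) + (\<Sum>j<Suc k. \<gamma> ^ j) * n1)
        \<le> (1 - \<alpha>) * WW (Suc k) x"
    using m1 m2 m3 m4 h3 h5 by linarith
  then show ?case by (simp add: A'_def H_def vs_def)
qed

lemma Lo2:
  assumes mdp: "is_mdp P r \<gamma>" and a0: "0 \<le> \<alpha>" and a1: "\<alpha> < 1" and n0: "0 \<le> n1"
    and epsb: "\<And>j x a. 1 \<le> j \<Longrightarrow> j \<le> K \<Longrightarrow> \<bar>eps j x a\<bar> \<le> n1"
    and Eb: "\<And>j x a. 1 \<le> j \<Longrightarrow> j \<le> K \<Longrightarrow> (1 - \<alpha>) * \<bar>EE j x a\<bar> \<le> n1"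
  shows "k \<le> K \<Longrightarrow> - (sg \<gamma> \<alpha> k + 2 * (\<Sum>j<k. \<gamma> ^ j) * n1) \<le> WW k x - WP k x"
proof (induction k arbitrary: x)
  case 0 then show ?case by (simp add: sg_def)
next
  case (Suc k)
  have g: "0 \<le> \<gamma>" "\<gamma> < 1" and rb: "\<And>x a. \<bar>r x a\<bar> \<le> 1" using mdp by (auto simp: is_mdp_def)
  define L where "L = sg \<gamma> \<alpha> k + 2 * (\<Sum>j<k. \<gamma> ^ j) * n1"
  have kK: "k \<le> K" using Suc.prems by simp
  have IH: "- L \<le> WW k y - WP k y" for y using Suc.IH[OF kK, of y] by (simp add: L_def)
  obtain b where b: "WW k x = SS k x b" using W_ex by blast
  have "SS (Suc k) x b - SS k x b \<le> WW (Suc k) x - WP (Suc k) x"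
    using W_ge[of "Suc k" x b] b by (simp add: sw_Suc(3))
  moreover have "SS (Suc k) x b - SS k x b
     = \<alpha> ^ k * r x b + \<gamma> * Pv P (\<lambda>y. WW k y - WP k y) x b + eps (Suc k) x b - (1 - \<alpha>) * EE k x b"
    by (rule S_diff)
  moreover have "- L \<le> Pv P (\<lambda>y. WW k y - WP k y) x b"
  proof -
    have "Pv P (\<lambda>y. - L) x b \<le> Pv P (\<lambda>y. WW k y - WP k y) x b + 0"
      using IH by (intro Pv_mono_bound[OF mdp]) simp
    then show ?thesis using Pv_const[OF mdp] by simp
  qed
  hence "\<gamma> * (- L) \<le> \<gamma> * Pv P (\<lambda>y. WW k y - WP k y) x b" using g(1) by (rule mult_left_mono)
  moreover have "\<alpha> ^ k * (- 1) \<le> \<alpha> ^ k * r x b" using rb[of x b] a0 by (intro mult_left_mono) auto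
  moreover have "- n1 \<le> eps (Suc k) x b" using epsb[of "Suc k" x b] Suc.prems by simp
  moreover have "(1 - \<alpha>) * EE k x b \<le> n1"
  proof (cases "k = 0")
    case True then show ?thesis using n0 by (simp add: E_0)
  next
    case False
    hence "(1 - \<alpha>) * \<bar>EE k x b\<bar> \<le> n1" using Eb[of k x b] kK by simp
    moreover have "(1 - \<alpha>) * EE k x b \<le> (1 - \<alpha>) * \<bar>EE k x b\<bar>" using a1 by (intro mult_left_mono) auto
    ultimately show ?thesis by linarith
  qed
  moreover have "sg \<gamma> \<alpha> (Suc k) + 2 * (\<Sum>j<Suc k. \<gamma> ^ j) * n1 = \<alpha> ^ k + \<gamma> * L + 2 * n1"
    unfolding sg_Suc geom_Suc L_def by (simp add: algebra_simps)
  ultimately show ?case by (simp add: algebra_simps)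
qed

lemma main_bound:
  assumes mdp: "is_mdp P r \<gamma>" and a0: "0 \<le> \<alpha>" and a1: "\<alpha> < 1" and n0: "0 \<le> n1" and M: "0 < M"
    and epsb: "\<And>j x a. 1 \<le> j \<Longrightarrow> j \<le> K \<Longrightarrow> \<bar>eps j x a\<bar> \<le> n1"
    and Eb: "\<And>j x a. 1 \<le> j \<Longrightarrow> j \<le> K \<Longrightarrow> (1 - \<alpha>) * \<bar>EE j x a\<bar> \<le> n1"
    and k: "1 \<le> k" "k \<le> K"
  shows "\<bar>VV k x - vstar P r \<gamma> x\<bar>
           \<le> 2 * (1 / (1 - \<gamma>)) * (2 * max \<alpha> \<gamma> ^ (k - 1) + A_gamma \<gamma> \<alpha> (k - 1) * (1 - \<alpha>) + 2 * n1)"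
proof -
  have g: "0 \<le> \<gamma>" "\<gamma> < 1" using mdp by (auto simp: is_mdp_def)
  obtain m where km: "k = Suc m" using k(1) by (cases k) auto
  define H where "H = 1 / (1 - \<gamma>)"
  define vs where "vs = vstar P r \<gamma>"
  define c where "c = (\<Sum>j<k. \<gamma> ^ j)"
  define A where "A = (\<Sum>j<k. \<alpha> ^ j)"
  define RHS where "RHS = 2 * H * (2 * max \<alpha> \<gamma> ^ m + A_gamma \<gamma> \<alpha> m * (1 - \<alpha>) + 2 * n1)"
  have H1: "1 \<le> H" using g by (simp add: H_def field_simps)
  have c0: "0 \<le> c" "c \<le> H" unfolding c_def H_def using g by (auto intro: geom_nonneg geom_le)
  have vsb: "\<bar>vs x\<bar> \<le> H" unfolding vs_def H_def by (rule vstar_props(2)[OF mdp])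
  have Ag0: "0 \<le> A_gamma \<gamma> \<alpha> m" using g a0 by (simp add: Ag_sg sg_nonneg)
  have up: "VV k x - vs x \<le> \<gamma> ^ k * H + c * n1"
    using Up[OF mdp a0 epsb k(2)] by (simp add: vs_def H_def c_def)
  have lo1: "(1 - \<alpha>) * A * vs x - ((1 - \<alpha>) * H * A_gamma \<gamma> \<alpha> k + c * n1) \<le> (1 - \<alpha>) * WW k x"
    using Lo1[OF mdp a0 a1 Eb k(2)] by (simp add: vs_def H_def c_def A_def)
  have lo2: "- (sg \<gamma> \<alpha> k + 2 * c * n1) \<le> WW k x - WP k x"
    using Lo2[OF mdp a0 a1 n0 epsb Eb k(2)] by (simp add: c_def)
  have VVd: "VV k x = (1 - \<alpha>) * WW k x + \<alpha> * (WW k x - WP k x)" by (simp add: VV_eq algebra_simps)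
  have one: "(1 - \<alpha>) * A + \<alpha> ^ k = 1" using one_diff_power_eq[of \<alpha> k] by (simp add: A_def)
  have vsd: "vs x = (1 - \<alpha>) * A * vs x + \<alpha> ^ k * vs x"
    using one by (metis distrib_right mult_1)
  have p1: "\<alpha> ^ k * vs x \<le> \<alpha> ^ k * H" using vsb a0 by (intro mult_left_mono) auto
  have p2: "\<alpha> * (- (sg \<gamma> \<alpha> k + 2 * c * n1)) \<le> \<alpha> * (WW k x - WP k x)"
    using lo2 a0 by (rule mult_left_mono)
  have low: "vs x - VV k x \<le> (1 - \<alpha>) * H * A_gamma \<gamma> \<alpha> k + c * n1 + \<alpha> ^ k * H + \<alpha> * (sg \<gamma> \<alpha> k + 2 * c * n1)"
  proof -
    have "vs x - VV k x = ((1 - \<alpha>) * A * vs x - (1 - \<alpha>) * WW k x) + \<alpha> ^ k * vs x - \<alpha> * (WW k x - WP k x)"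
      using vsd VVd by linarith
    then show ?thesis using lo1 p1 p2 by (simp add: algebra_simps)
  qed
  have sc: "(1 - \<alpha>) * H * A_gamma \<gamma> \<alpha> k + c * n1 + \<alpha> ^ k * H + \<alpha> * (sg \<gamma> \<alpha> k + 2 * c * n1) \<le> RHS"
    using scalar_final[OF a0 a1 g n0 c0[unfolded H_def], of m] unfolding RHS_def H_def km by simp
  have upb: "\<gamma> ^ k * H + c * n1 \<le> RHS"
  proof -
    have "\<gamma> ^ k \<le> \<gamma> ^ m" unfolding km using g by (simp add: mult_left_le_one_le)
    also have "\<dots> \<le> max \<alpha> \<gamma> ^ m" using g by (intro power_mono) auto
    finally have "\<gamma> ^ k * H \<le> max \<alpha> \<gamma> ^ m * H" using H1 by (intro mult_right_mono) auto
    moreover have "c * n1 \<le> H * n1" using c0 n0 by (intro mult_right_mono) auto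
    moreover have "0 \<le> max \<alpha> \<gamma> ^ m * H" using H1 g by simp
    moreover have "0 \<le> H * n1" using H1 n0 by simp
    moreover have "0 \<le> H * (A_gamma \<gamma> \<alpha> m * (1 - \<alpha>))" using H1 Ag0 a1 by simp
    ultimately show ?thesis unfolding RHS_def by (simp add: algebra_simps)
  qed
  have "\<bar>VV k x - vs x\<bar> \<le> RHS" using up upb low sc by linarith
  then show ?thesis by (simp add: RHS_def H_def vs_def km)
qed

end

theorem lemma6:
  fixes P :: "'x::finite \<Rightarrow> 'a::finite \<Rightarrow> 'x \<Rightarrow> real"
    and r :: "'x \<Rightarrow> 'a \<Rightarrow> real"
    and \<gamma> \<alpha> \<delta> :: real
    and K M :: nat
    and y :: "nat \<Rightarrow> nat \<Rightarrow> 'x \<Rightarrow> 'a \<Rightarrow> 'x"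
  defines "H \<equiv> 1 / (1 - \<gamma>)"
    and "\<iota> \<equiv> iota1 K (card (UNIV :: 'x set)) (card (UNIV :: 'a set)) \<delta>"
  assumes mdp: "is_mdp P r \<gamma>"
    and alpha: "0 \<le> \<alpha>" "\<alpha> < 1"
    and KM: "0 < K" "0 < M"
    and delta: "0 < \<delta>" "\<delta> < 1"
    and samples: "\<And>k m x a. k < K \<Longrightarrow> m < M \<Longrightarrow> 0 < P x a (y k m x a)"
    and E1: "\<And>k x a. 1 \<le> k \<Longrightarrow> k \<le> K \<Longrightarrow>
               \<bar>mdvi_E P r \<gamma> \<alpha> M y k x a\<bar> < 3 * H * sqrt (A_inf \<alpha> * \<iota> / real M)"
    and E2: "\<And>k x a. 1 \<le> k \<Longrightarrow> k \<le> K \<Longrightarrow>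
               \<bar>mdvi_eps P r \<gamma> \<alpha> M y k x a\<bar> < 3 * H * sqrt (\<iota> / real M)"
  shows "(\<forall>k\<in>{1..K-1}. \<forall>x a.
            sigmaP P (mdvi_v r \<gamma> \<alpha> M y k) x a
              \<le> 2 * H * min 1 (2 * (max \<alpha> \<gamma>) ^ (k - 1) + A_gamma \<gamma> \<alpha> (k - 1) / A_inf \<alpha>
                                 + 6 * H * sqrt (\<iota> / real M))
                + sigmaP P (vstar P r \<gamma>) x a)
         \<and> (\<forall>x a. sigmaP P (mdvi_v r \<gamma> \<alpha> M y 0) x a = 0)"
proof
  have g: "0 \<le> \<gamma>" "\<gamma> < 1" using mdp by (auto simp: is_mdp_def)
  have H1: "1 \<le> H" using g by (simp add: H_def field_simps)
  define n1 where "n1 = 3 * H * sqrt (\<iota> / real M)"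
  have iota0: "0 \<le> \<iota>"
  proof -
    have c1: "1 \<le> real (card (UNIV :: 'x set))" "1 \<le> real (card (UNIV :: 'a set))"
      by (simp_all add: Suc_le_eq card_gt_0_iff)
    have "1 \<le> real K" using KM by simp
    hence p1: "1 \<le> real K * real (card (UNIV :: 'x set))"
      using mult_mono[of 1 "real K" 1 "real (card (UNIV :: 'x set))"] c1 by simp
    hence p2: "1 \<le> real K * real (card (UNIV :: 'x set)) * real (card (UNIV :: 'a set))"
      using mult_mono[of 1 "real K * real (card (UNIV :: 'x set))" 1 "real (card (UNIV :: 'a set))"] c1 by simp
    have "8 * real K * real (card (UNIV :: 'x set)) * real (card (UNIV :: 'a set))
        = 8 * (real K * real (card (UNIV :: 'x set)) * real (card (UNIV :: 'a set)))" by simp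
    hence "1 \<le> 8 * real K * real (card (UNIV :: 'x set)) * real (card (UNIV :: 'a set))"
      using p2 by linarith
    also have "\<dots> \<le> 8 * real K * real (card (UNIV :: 'x set)) * real (card (UNIV :: 'a set)) / \<delta>"
    proof -
      define N where "N = 8 * real K * real (card (UNIV :: 'x set)) * real (card (UNIV :: 'a set))"
      have "0 \<le> N" unfolding N_def by simp
      hence "N * \<delta> \<le> N * 1" using delta by (intro mult_left_mono) auto
      hence "N \<le> N / \<delta>" using delta by (simp add: pos_le_divide_eq)
      then show ?thesis unfolding N_def .
    qed
    finally show ?thesis unfolding \<iota>_def iota1_def by simp
  qed
  have n0: "0 \<le> n1" unfolding n1_def using H1 iota0 by simp
  have epsb: "\<bar>mdvi_eps P r \<gamma> \<alpha> M y j x a\<bar> \<le> n1" if "1 \<le> j" "j \<le> K" for j x a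
    using E2[OF that, of x a] by (simp add: n1_def)
  have Eb: "(1 - \<alpha>) * \<bar>mdvi_E P r \<gamma> \<alpha> M y j x a\<bar> \<le> n1" if "1 \<le> j" "j \<le> K" for j x a
  proof -
    define t where "t = \<iota> / real M"
    have t0: "0 \<le> t" using iota0 by (simp add: t_def)
    have am: "0 < 1 - \<alpha>" using alpha by simp
    have "(1 - \<alpha>) * \<bar>mdvi_E P r \<gamma> \<alpha> M y j x a\<bar> \<le> (1 - \<alpha>) * (3 * H * sqrt (A_inf \<alpha> * \<iota> / real M))"
      using E1[OF that, of x a] am by (intro mult_left_mono) auto
    also have "A_inf \<alpha> * \<iota> / real M = t / (1 - \<alpha>)" by (simp add: A_inf_def t_def)
    also have "(1 - \<alpha>) * (3 * H * sqrt (t / (1 - \<alpha>))) = 3 * H * ((1 - \<alpha>) * sqrt (t / (1 - \<alpha>)))" by simp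
    also have "(1 - \<alpha>) * sqrt (t / (1 - \<alpha>)) = sqrt ((1 - \<alpha>) * t)"
    proof -
      have "(1 - \<alpha>) = sqrt ((1 - \<alpha>)\<^sup>2)" using am by simp
      hence "(1 - \<alpha>) * sqrt (t / (1 - \<alpha>)) = sqrt ((1 - \<alpha>)\<^sup>2 * (t / (1 - \<alpha>)))"
        by (metis real_sqrt_mult)
      also have "(1 - \<alpha>)\<^sup>2 * (t / (1 - \<alpha>)) = (1 - \<alpha>) * t" using am by (simp add: power2_eq_square)
      finally show ?thesis .
    qed
    also have "sqrt ((1 - \<alpha>) * t) \<le> sqrt t" using alpha t0 by (intro real_sqrt_le_mono) (simp add: mult_left_le_one_le)
    finally show ?thesis unfolding n1_def t_def using H1 by (simp add: mult_left_mono)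
  qed
  show "\<forall>k\<in>{1..K-1}. \<forall>x a.
            sigmaP P (mdvi_v r \<gamma> \<alpha> M y k) x a
              \<le> 2 * H * min 1 (2 * (max \<alpha> \<gamma>) ^ (k - 1) + A_gamma \<gamma> \<alpha> (k - 1) / A_inf \<alpha>
                                 + 6 * H * sqrt (\<iota> / real M))
                + sigmaP P (vstar P r \<gamma>) x a"
  proof (intro ballI allI)
    fix k x a assume kin: "k \<in> {1..K-1}"
    have k: "1 \<le> k" "k \<le> K" using kin by auto
    define X where "X = 2 * (max \<alpha> \<gamma>) ^ (k - 1) + A_gamma \<gamma> \<alpha> (k - 1) / A_inf \<alpha> + 6 * H * sqrt (\<iota> / real M)"
    have X: "X = 2 * max \<alpha> \<gamma> ^ (k - 1) + A_gamma \<gamma> \<alpha> (k - 1) * (1 - \<alpha>) + 2 * n1"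
      unfolding X_def n1_def A_inf_def by simp
    have b: "\<bar>mdvi_v r \<gamma> \<alpha> M y k z - vstar P r \<gamma> z\<bar> \<le> 2 * H * min 1 X" for z
    proof -
      have b1: "\<bar>mdvi_v r \<gamma> \<alpha> M y k z - vstar P r \<gamma> z\<bar> \<le> 2 * H * X"
        using main_bound[OF mdp alpha n0 KM(2) epsb Eb k, of z] unfolding X H_def by simp
      have "\<bar>mdvi_v r \<gamma> \<alpha> M y k z\<bar> \<le> H" unfolding H_def by (rule V_bound[OF mdp alpha(1) KM(2)])
      moreover have "\<bar>vstar P r \<gamma> z\<bar> \<le> H" unfolding H_def by (rule vstar_props(2)[OF mdp])
      ultimately have b2: "\<bar>mdvi_v r \<gamma> \<alpha> M y k z - vstar P r \<gamma> z\<bar> \<le> 2 * H * 1" by linarith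
      show ?thesis using b1 b2 by (simp add: min_def)
    qed
    have "sigmaP P (mdvi_v r \<gamma> \<alpha> M y k) x a
        \<le> sigmaP P (\<lambda>z. mdvi_v r \<gamma> \<alpha> M y k z - vstar P r \<gamma> z) x a + sigmaP P (vstar P r \<gamma>) x a"
      using sigma_triangle[OF mdp, of "\<lambda>z. mdvi_v r \<gamma> \<alpha> M y k z - vstar P r \<gamma> z" "vstar P r \<gamma>" x a] by simp
    also have "sigmaP P (\<lambda>z. mdvi_v r \<gamma> \<alpha> M y k z - vstar P r \<gamma> z) x a \<le> 2 * H * min 1 X"
      by (rule sigma_bound[OF mdp b])
    finally show "sigmaP P (mdvi_v r \<gamma> \<alpha> M y k) x a
              \<le> 2 * H * min 1 (2 * (max \<alpha> \<gamma>) ^ (k - 1) + A_gamma \<gamma> \<alpha> (k - 1) / A_inf \<alpha>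
                                 + 6 * H * sqrt (\<iota> / real M))
                + sigmaP P (vstar P r \<gamma>) x a" unfolding X_def by simp
  qed
  show "\<forall>x a. sigmaP P (mdvi_v r \<gamma> \<alpha> M y 0) x a = 0"
  proof (intro allI)
    fix x a
    have "mdvi_v r \<gamma> \<alpha> M y 0 = (\<lambda>z. 0)" by (rule ext) (simp add: mdvi_v_def)
    then show "sigmaP P (mdvi_v r \<gamma> \<alpha> M y 0) x a = 0" by (simp add: sigma_zero)
  qed
qed

end
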